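(* For any smooth complex-valued potential $V(t,x)$, $\dim\mathfrak g^{\mathrm{ess}}_V\le7$.
   Context: $\mathfrak g_V$ denotes the maximal Lie invariance algebra of the equation $i\psi_t+\psi_{xx}+V(t,x)\psi=0$ ($\psi$ complex-valued of real $t,x$; vector fields act on $(t,x,\psi,\psi^* )$ with $\psi^*$ an additional dependent variable), considered locally. With $M=i\psi\partial_\psi-i\psi^*\partial_{\psi^*}$, $I=\psi\partial_\psi+\psi^*\partial_{\psi^*}$, $D(\tau)=\tau\partial_t+\frac12\tau_tx\partial_x+\frac18\tau_{tt}x^2M$, $G(\chi)=\chi\partial_x+\frac12\chi_txM$, the essential Lie invariance algebra is $\mathfrak g^{\mathrm{ess}}_V:=\mathfrak g_V\cap\langle D(\tau),G(\chi),\sigma(t)M,\rho(t)I\rangle$, the span being over all smooth real functions $\tau,\chi,\sigma,\rho$ of $t$. *)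

theory Defs
  imports "HOL-Analysis.Analysis"
begin

definition pt :: "(real \<Rightarrow> real \<Rightarrow> 'a::real_normed_vector) \<Rightarrow> real \<Rightarrow> real \<Rightarrow> 'a" where
  "pt f t x = vector_derivative (\<lambda>s. f s x) (at t)"

definition px :: "(real \<Rightarrow> real \<Rightarrow> 'a::real_normed_vector) \<Rightarrow> real \<Rightarrow> real \<Rightarrow> 'a" where
  "px f t x = vector_derivative (\<lambda>y. f t y) (at x)"

datatype pdir = Dt | Dx

fun iter_partial :: "pdir list \<Rightarrow> (real \<Rightarrow> real \<Rightarrow> 'a::real_normed_vector) \<Rightarrow> real \<Rightarrow> real \<Rightarrow> 'a" where
  "iter_partial [] f = f"
| "iter_partial (Dt # ds) f = pt (iter_partial ds f)"
| "iter_partial (Dx # ds) f = px (iter_partial ds f)"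

definition smooth2_on :: "(real \<times> real) set \<Rightarrow> (real \<Rightarrow> real \<Rightarrow> 'a::real_normed_vector) \<Rightarrow> bool" where
  "smooth2_on S f \<longleftrightarrow> (\<forall>ds. continuous_on S (\<lambda>(t,x). iter_partial ds f t x) \<and>
      (\<forall>(t,x)\<in>S. (\<lambda>s. iter_partial ds f s x) differentiable (at t) \<and>
                  (\<lambda>y. iter_partial ds f t y) differentiable (at x)))"

definition smooth1_on :: "real set \<Rightarrow> (real \<Rightarrow> real) \<Rightarrow> bool" where
  "smooth1_on I f \<longleftrightarrow> (\<forall>n. \<forall>t\<in>I. ((deriv ^^ n) f) differentiable (at t))"

text \<open>Infinitesimal invariance criterion (second prolongation) of the system
  i psi_t + psi_xx + V psi = 0, -i psi*_t + psi*_xx + V* psi* = 0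
  for the point vector field
  Q = T(t,x) dt + Xi(t,x) dx + Phi(t,x) psi dpsi + conj(Phi(t,x)) psi* dpsi*,
  on the jet space over the domain I x J. The jet variables
  (u, ut, ux, utx, uxx) are the values of (psi, psi_t, psi_x, psi_tx, psi_xx),
  similarly (w, ...) for psi*.\<close>
definition pr_psi_t :: "(real\<Rightarrow>real\<Rightarrow>real) \<Rightarrow> (real\<Rightarrow>real\<Rightarrow>real) \<Rightarrow> (real\<Rightarrow>real\<Rightarrow>complex)
    \<Rightarrow> real \<Rightarrow> real \<Rightarrow> complex \<Rightarrow> complex \<Rightarrow> complex \<Rightarrow> complex" where
  "pr_psi_t T Xi Phi t x u ut ux =
     pt Phi t x * u + Phi t x * ut - of_real (pt T t x) * ut - of_real (pt Xi t x) * ux"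

definition pr_psi_xx :: "(real\<Rightarrow>real\<Rightarrow>real) \<Rightarrow> (real\<Rightarrow>real\<Rightarrow>real) \<Rightarrow> (real\<Rightarrow>real\<Rightarrow>complex)
    \<Rightarrow> real \<Rightarrow> real \<Rightarrow> complex \<Rightarrow> complex \<Rightarrow> complex \<Rightarrow> complex \<Rightarrow> complex \<Rightarrow> complex" where
  "pr_psi_xx T Xi Phi t x u ut ux utx uxx =
     px (px Phi) t x * u + 2 * px Phi t x * ux + Phi t x * uxx
     - of_real (px (px T) t x) * ut - 2 * of_real (px T t x) * utx
     - of_real (px (px Xi) t x) * ux - 2 * of_real (px Xi t x) * uxx"

definition lie_sym :: "real set \<Rightarrow> real set \<Rightarrow> (real\<Rightarrow>real\<Rightarrow>complex)
    \<Rightarrow> (real\<Rightarrow>real\<Rightarrow>real) \<Rightarrow> (real\<Rightarrow>real\<Rightarrow>real) \<Rightarrow> (real\<Rightarrow>real\<Rightarrow>complex) \<Rightarrow> bool" where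
  "lie_sym I J V T Xi Phi \<longleftrightarrow>
    (\<forall>t\<in>I. \<forall>x\<in>J. \<forall>u ut ux utx uxx.
       \<i> * ut + uxx + V t x * u = 0 \<longrightarrow>
       \<i> * pr_psi_t T Xi Phi t x u ut ux + pr_psi_xx T Xi Phi t x u ut ux utx uxx
       + (of_real (T t x) * pt V t x + of_real (Xi t x) * px V t x) * u
       + V t x * (Phi t x * u) = 0) \<and>
    (\<forall>t\<in>I. \<forall>x\<in>J. \<forall>w wt wx wtx wxx.
       - \<i> * wt + wxx + cnj (V t x) * w = 0 \<longrightarrow>
       - \<i> * pr_psi_t T Xi (\<lambda>t x. cnj (Phi t x)) t x w wt wx
       + pr_psi_xx T Xi (\<lambda>t x. cnj (Phi t x)) t x w wt wx wtx wxx
       + (of_real (T t x) * pt (\<lambda>t x. cnj (V t x)) t x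
          + of_real (Xi t x) * px (\<lambda>t x. cnj (V t x)) t x) * w
       + cnj (V t x) * (cnj (Phi t x) * w) = 0)"

text \<open>Coefficients of Q = D(ta) + G(ch) + sg M + rh I.\<close>
definition coefT :: "(real\<Rightarrow>real) \<times> (real\<Rightarrow>real) \<times> (real\<Rightarrow>real) \<times> (real\<Rightarrow>real) \<Rightarrow> real \<Rightarrow> real \<Rightarrow> real" where
  "coefT q t x = (case q of (ta, ch, sg, rh) \<Rightarrow> ta t)"

definition coefX :: "(real\<Rightarrow>real) \<times> (real\<Rightarrow>real) \<times> (real\<Rightarrow>real) \<times> (real\<Rightarrow>real) \<Rightarrow> real \<Rightarrow> real \<Rightarrow> real" where
  "coefX q t x = (case q of (ta, ch, sg, rh) \<Rightarrow> deriv ta t * x / 2 + ch t)"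

definition coefPhi :: "(real\<Rightarrow>real) \<times> (real\<Rightarrow>real) \<times> (real\<Rightarrow>real) \<times> (real\<Rightarrow>real) \<Rightarrow> real \<Rightarrow> real \<Rightarrow> complex" where
  "coefPhi q t x = (case q of (ta, ch, sg, rh) \<Rightarrow>
      \<i> * of_real ((deriv ^^ 2) ta t * x\<^sup>2 / 8 + deriv ch t * x / 2 + sg t) + of_real (rh t))"

definition vf :: "(real\<Rightarrow>real) \<times> (real\<Rightarrow>real) \<times> (real\<Rightarrow>real) \<times> (real\<Rightarrow>real)
    \<Rightarrow> real \<Rightarrow> real \<Rightarrow> complex \<Rightarrow> complex \<Rightarrow> real \<times> real \<times> complex \<times> complex" where
  "vf q t x u w = (coefT q t x, coefX q t x, coefPhi q t x * u, cnj (coefPhi q t x) * w)"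

definition ess_alg :: "real set \<Rightarrow> real set \<Rightarrow> (real\<Rightarrow>real\<Rightarrow>complex)
    \<Rightarrow> ((real\<Rightarrow>real) \<times> (real\<Rightarrow>real) \<times> (real\<Rightarrow>real) \<times> (real\<Rightarrow>real)) set" where
  "ess_alg I J V = {q. case q of (ta, ch, sg, rh) \<Rightarrow>
      smooth1_on I ta \<and> smooth1_on I ch \<and> smooth1_on I sg \<and> smooth1_on I rh \<and>
      lie_sym I J V (coefT q) (coefX q) (coefPhi q)}"

definition vf_lin_indep :: "real set \<Rightarrow> real set \<Rightarrow> nat
    \<Rightarrow> (nat \<Rightarrow> (real\<Rightarrow>real) \<times> (real\<Rightarrow>real) \<times> (real\<Rightarrow>real) \<times> (real\<Rightarrow>real)) \<Rightarrow> bool" where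
  "vf_lin_indep I J k q \<longleftrightarrow>
     (\<forall>c :: nat \<Rightarrow> real.
        (\<forall>t\<in>I. \<forall>x\<in>J. \<forall>u w. (\<Sum>i<k. c i *\<^sub>R vf (q i) t x u w) = 0) \<longrightarrow> (\<forall>i<k. c i = 0))"

end

theory Submission
  imports Defs
begin


lemma sq_sum_le:
  fixes f :: "nat \<Rightarrow> real"
  shows "(\<Sum>k<n. \<bar>f k\<bar>)^2 \<le> real n * (\<Sum>k<n. (f k)^2)"
proof -
  have "(\<Sum>k<n. \<bar>f k\<bar>)^2 = (\<Sum>j<n. \<Sum>k<n. \<bar>f j\<bar> * \<bar>f k\<bar>)"
    by (simp add: power2_eq_square sum_product)
  also have "\<dots> \<le> (\<Sum>j<n. \<Sum>k<n. ((f j)^2 + (f k)^2)/2)"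
  proof (intro sum_mono)
    fix j k
    have "0 \<le> (\<bar>f j\<bar> - \<bar>f k\<bar>)^2" by simp
    then show "\<bar>f j\<bar> * \<bar>f k\<bar> \<le> ((f j)^2 + (f k)^2)/2"
      by (simp add: power2_eq_square algebra_simps)
  qed
  also have "\<dots> = real n * (\<Sum>k<n. (f k)^2)"
    by (simp add: add_divide_distrib sum.distrib sum_divide_distrib[symmetric] sum_distrib_left)
  finally show ?thesis .
qed

lemma ode_zero:
  fixes z z' :: "nat \<Rightarrow> real \<Rightarrow> real" and a b t0 K t :: real
  assumes der: "\<And>j s. j<n \<Longrightarrow> a \<le> s \<Longrightarrow> s \<le> b \<Longrightarrow> (z j has_real_derivative z' j s) (at s)"
  and bnd: "\<And>j s. j<n \<Longrightarrow> a \<le> s \<Longrightarrow> s \<le> b \<Longrightarrow> \<bar>z' j s\<bar> \<le> K * (\<Sum>k<n. \<bar>z k s\<bar>)"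
  and t0: "a \<le> t0" "t0 \<le> b" and init: "\<And>j. j<n \<Longrightarrow> z j t0 = 0"
  and t: "a \<le> t" "t \<le> b"
  shows "\<forall>j<n. z j t = 0"
proof -
  define E where "E s = (\<Sum>j<n. (z j s)^2)" for s
  define E' where "E' s = (\<Sum>j<n. 2 * z j s * z' j s)" for s
  define L where "L = 2 * \<bar>K\<bar> * real n"
  have dE: "(E has_real_derivative E' s) (at s)" if "a \<le> s" "s \<le> b" for s
    unfolding E_def E'_def
    by (rule DERIV_sum) (auto intro!: derivative_eq_intros der that)
  have Epos: "0 \<le> E s" for s unfolding E_def by (simp add: sum_nonneg)
  have bndE: "\<bar>E' s\<bar> \<le> L * E s" if "a \<le> s" "s \<le> b" for s
  proof -
    define S where "S = (\<Sum>k<n. \<bar>z k s\<bar>)"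
    have S0: "0 \<le> S" unfolding S_def by (simp add: sum_nonneg)
    have "\<bar>E' s\<bar> \<le> (\<Sum>j<n. \<bar>2 * z j s * z' j s\<bar>)" unfolding E'_def by (rule sum_abs)
    also have "\<dots> \<le> (\<Sum>j<n. 2*\<bar>z j s\<bar> * (\<bar>K\<bar> * S))"
    proof (intro sum_mono)
      fix j assume "j \<in> {..<n}"
      then have "\<bar>z' j s\<bar> \<le> \<bar>K\<bar> * S" using bnd[of j s] that S0 unfolding S_def
        by (meson abs_ge_self lessThan_iff mult_right_mono order_trans)
      then show "\<bar>2 * z j s * z' j s\<bar> \<le> 2*\<bar>z j s\<bar> * (\<bar>K\<bar> * S)"
        by (simp add: abs_mult mult_left_mono)
    qed
    also have "\<dots> = 2*\<bar>K\<bar> * S^2"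
      by (simp add: S_def power2_eq_square sum_distrib_left sum_distrib_right mult_ac)
    also have "\<dots> \<le> 2*\<bar>K\<bar> * (real n * E s)"
      unfolding S_def E_def by (intro mult_left_mono sq_sum_le) auto
    finally show ?thesis by (simp add: L_def mult_ac)
  qed
  have "E t = 0"
  proof (cases "t0 \<le> t")
    case True
    have "(\<lambda>s. E s * exp (- L * s)) t \<le> (\<lambda>s. E s * exp (- L * s)) t0"
    proof (rule DERIV_nonpos_imp_nonincreasing[OF True])
      fix s assume s: "t0 \<le> s" "s \<le> t"
      have "((\<lambda>s. E s * exp (- L * s)) has_real_derivative
             E' s * exp (- L * s) + E s * (exp (- L * s) * (- L * 1))) (at s)"
        using s t0 t by (auto intro!: derivative_eq_intros dE)
      moreover have "E' s * exp (- L * s) + E s * (exp (- L * s) * (- L * 1)) = (E' s - L * E s) * exp (- L * s)"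
        by (simp add: algebra_simps)
      moreover have "(E' s - L * E s) * exp (- L * s) \<le> 0"
        using bndE[of s] s t0 t by (intro mult_nonpos_nonneg) auto
      ultimately show "\<exists>y. ((\<lambda>s. E s * exp (- L * s)) has_real_derivative y) (at s) \<and> y \<le> 0"
        by metis
    qed
    then have "E t * exp (- L * t) \<le> 0" using init by (simp add: E_def)
    then show ?thesis using Epos[of t] by (simp add: mult_le_0_iff)
  next
    case False
    then have ft: "t \<le> t0" by simp
    have "(\<lambda>s. E s * exp (L * s)) t \<le> (\<lambda>s. E s * exp (L * s)) t0"
    proof (rule DERIV_nonneg_imp_nondecreasing[OF ft])
      fix s assume s: "t \<le> s" "s \<le> t0"
      have "((\<lambda>s. E s * exp (L * s)) has_real_derivative
             E' s * exp (L * s) + E s * (exp (L * s) * (L * 1))) (at s)"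
        using s t0 t by (auto intro!: derivative_eq_intros dE)
      moreover have "E' s * exp (L * s) + E s * (exp (L * s) * (L * 1)) = (E' s + L * E s) * exp (L * s)"
        by (simp add: algebra_simps)
      moreover have "0 \<le> (E' s + L * E s) * exp (L * s)"
        using bndE[of s] s t0 t by (intro mult_nonneg_nonneg) auto
      ultimately show "\<exists>y. ((\<lambda>s. E s * exp (L * s)) has_real_derivative y) (at s) \<and> y \<ge> 0"
        by metis
    qed
    then have "E t * exp (L * t) \<le> 0" using init by (simp add: E_def)
    then show ?thesis using Epos[of t] by (simp add: mult_le_0_iff)
  qed
  then show ?thesis unfolding E_def by (simp add: sum_nonneg_eq_0_iff)
qed



lemma ess_eq:
  assumes q: "(ta,ch,sg,rh) \<in> ess_alg I J V" and t: "t\<in>I" and x: "x\<in>J"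
  shows "(deriv^^3) ta t * x^2/8 + deriv (deriv ch) t * x/2 + deriv sg t
          = deriv ta t * Re (V t x) + ta t * Re (pt V t x) + (deriv ta t * x/2 + ch t) * Re (px V t x)"
    and "deriv rh t + (deriv^^2) ta t / 4 + deriv ta t * Im (V t x) + ta t * Im (pt V t x)
          + (deriv ta t * x/2 + ch t) * Im (px V t x) = 0"
proof -
  let ?q = "(ta,ch,sg,rh)"
  from q have sm: "smooth1_on I ta" "smooth1_on I ch" "smooth1_on I sg" "smooth1_on I rh"
    and ls: "lie_sym I J V (coefT ?q) (coefX ?q) (coefPhi ?q)"
    by (auto simp: ess_alg_def)
  have diff: "((deriv^^n) f) differentiable (at t)" if "smooth1_on I f" for f n
    using that t by (auto simp: smooth1_on_def)
  have d2: "((deriv^^2) ta has_real_derivative (deriv^^3) ta t) (at t)"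
  proof -
    have "(deriv^^3) ta = deriv ((deriv^^2) ta)" by (simp add: numeral_3_eq_3 numeral_2_eq_2)
    then show ?thesis using diff[OF sm(1), of 2] DERIV_deriv_iff_real_differentiable by simp
  qed
  have dch: "(deriv ch has_real_derivative deriv (deriv ch) t) (at t)"
    using diff[OF sm(2), of 1] DERIV_deriv_iff_real_differentiable by simp
  have dsg: "(sg has_real_derivative deriv sg t) (at t)"
    using diff[OF sm(3), of 0] DERIV_deriv_iff_real_differentiable by simp
  have drh: "(rh has_real_derivative deriv rh t) (at t)"
    using diff[OF sm(4), of 0] DERIV_deriv_iff_real_differentiable by simp
  have ptPhi: "pt (coefPhi ?q) t x = \<i> * of_real ((deriv^^3) ta t * x^2/8 + deriv (deriv ch) t * x/2 + deriv sg t) + of_real (deriv rh t)"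
    unfolding pt_def coefPhi_def prod.case
    by (rule vector_derivative_at)
       (auto intro!: derivative_eq_intros d2 dch dsg drh has_vector_derivative_mult_right)
  have pxPhi: "px (coefPhi ?q) t = (\<lambda>y. \<i> * of_real ((deriv^^2) ta t * y/4 + deriv ch t / 2))"
  proof
    fix y
    show "px (coefPhi ?q) t y = \<i> * of_real ((deriv^^2) ta t * y/4 + deriv ch t / 2)"
    proof -
      have r: "((\<lambda>y. (deriv^^2) ta t * y^2/8 + deriv ch t * y/2 + sg t) has_real_derivative ((deriv^^2) ta t * y/4 + deriv ch t / 2)) (at y)"
        by (rule derivative_eq_intros refl | simp add: field_simps)+
      have "((\<lambda>y. \<i> * of_real ((deriv^^2) ta t * y^2/8 + deriv ch t * y/2 + sg t) + of_real (rh t)) has_vector_derivative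
          (\<i> * of_real ((deriv^^2) ta t * y/4 + deriv ch t / 2) + 0)) (at y)"
        by (intro has_vector_derivative_add has_vector_derivative_mult_right has_vector_derivative_of_real r has_vector_derivative_const)
      then have "vector_derivative (\<lambda>y. \<i> * of_real ((deriv^^2) ta t * y^2/8 + deriv ch t * y/2 + sg t) + of_real (rh t)) (at y)
          = \<i> * of_real ((deriv^^2) ta t * y/4 + deriv ch t / 2) + 0"
        by (rule vector_derivative_at)
      then show ?thesis unfolding px_def coefPhi_def prod.case by simp
    qed
  qed
  have pxxPhi: "px (px (coefPhi ?q)) t x = \<i> * of_real ((deriv^^2) ta t / 4)"
  proof -
    have r: "((\<lambda>y. (deriv^^2) ta t * y/4 + deriv ch t / 2) has_real_derivative ((deriv^^2) ta t / 4)) (at x)"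
      by (rule derivative_eq_intros refl | simp)+
    have "((\<lambda>y. \<i> * of_real ((deriv^^2) ta t * y/4 + deriv ch t / 2)) has_vector_derivative
          (\<i> * of_real ((deriv^^2) ta t / 4))) (at x)"
      by (intro has_vector_derivative_mult_right has_vector_derivative_of_real r)
    then show ?thesis unfolding px_def[of "px (coefPhi ?q)"] pxPhi
      by (rule vector_derivative_at)
  qed
  have pxX: "px (coefX ?q) t x = deriv ta t / 2"
    unfolding px_def coefX_def prod.case
    by (rule vector_derivative_at)
       (auto intro!: derivative_eq_intros simp: has_real_derivative_iff_has_vector_derivative[symmetric])
  from ls t x have E: "\<i> * pr_psi_t (coefT ?q) (coefX ?q) (coefPhi ?q) t x 1 0 0
       + pr_psi_xx (coefT ?q) (coefX ?q) (coefPhi ?q) t x 1 0 0 0 (- V t x)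
       + (of_real (coefT ?q t x) * pt V t x + of_real (coefX ?q t x) * px V t x) * 1
       + V t x * (coefPhi ?q t x * 1) = 0"
  proof -
    have H: "\<And>u ut ux utx uxx. \<i> * ut + uxx + V t x * u = 0 \<Longrightarrow>
       \<i> * pr_psi_t (coefT ?q) (coefX ?q) (coefPhi ?q) t x u ut ux + pr_psi_xx (coefT ?q) (coefX ?q) (coefPhi ?q) t x u ut ux utx uxx
       + (of_real (coefT ?q t x) * pt V t x + of_real (coefX ?q t x) * px V t x) * u
       + V t x * (coefPhi ?q t x * u) = 0"
      using ls t x unfolding lie_sym_def by blast
    show ?thesis by (rule H) simp
  qed
  then have E': "\<i> * pt (coefPhi ?q) t x + px (px (coefPhi ?q)) t x + 2 * of_real (px (coefX ?q) t x) * V t x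
       + (of_real (coefT ?q t x) * pt V t x + of_real (coefX ?q t x) * px V t x) = 0"
    by (simp add: pr_psi_t_def pr_psi_xx_def algebra_simps)
  have E'': "\<i> * (\<i> * of_real ((deriv^^3) ta t * x^2/8 + deriv (deriv ch) t * x/2 + deriv sg t) + of_real (deriv rh t))
      + \<i> * of_real ((deriv^^2) ta t / 4) + 2 * of_real (deriv ta t / 2) * V t x
       + (of_real (ta t) * pt V t x + of_real (deriv ta t * x / 2 + ch t) * px V t x) = 0"
    using E' unfolding ptPhi pxxPhi pxX by (simp add: coefT_def coefX_def)
  from arg_cong[OF E'', of Re] show "(deriv^^3) ta t * x^2/8 + deriv (deriv ch) t * x/2 + deriv sg t
          = deriv ta t * Re (V t x) + ta t * Re (pt V t x) + (deriv ta t * x/2 + ch t) * Re (px V t x)"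
    by (simp add: algebra_simps)
  from arg_cong[OF E'', of Im] show "deriv rh t + (deriv^^2) ta t / 4 + deriv ta t * Im (V t x) + ta t * Im (pt V t x)
          + (deriv ta t * x/2 + ch t) * Im (px V t x) = 0"
    by (simp add: algebra_simps)
qed



lemma dep_family:
  fixes Y :: "nat \<Rightarrow> 'a::euclidean_space"
  assumes "DIM('a) < k"
  shows "\<exists>c. (\<exists>i<k. c i \<noteq> 0) \<and> (\<Sum>i<k. c i *\<^sub>R Y i) = 0"
proof (cases "inj_on Y {..<k}")
  case False
  then obtain i j where ij: "i<k" "j<k" "i\<noteq>j" "Y i = Y j" unfolding inj_on_def by auto
  define c where "c l = (if l = i then 1 else if l = j then -1 else (0::real))" for l
  have "(\<Sum>l<k. c l *\<^sub>R Y l) = (\<Sum>l<k. (if l = i then Y i else 0) - (if l = j then Y j else 0))"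
    using ij by (intro sum.cong) (auto simp: c_def)
  also have "\<dots> = 0" using ij by (simp add: sum_subtractf)
  finally have "(\<Sum>l<k. c l *\<^sub>R Y l) = 0" .
  moreover have "c i \<noteq> 0" by (simp add: c_def)
  ultimately show ?thesis using ij by blast
next
  case True
  let ?S = "Y ` {..<k}"
  have fin: "finite ?S" by simp
  have "card ?S = k" using True by (simp add: card_image)
  then have "\<not> independent ?S" using independent_bound assms by fastforce
  then obtain u where u: "(\<Sum>v\<in>?S. u v *\<^sub>R v) = 0" "\<exists>v\<in>?S. u v \<noteq> 0"
    using fin unfolding independent_explicit by blast
  have "(\<Sum>i<k. u (Y i) *\<^sub>R Y i) = (\<Sum>v\<in>?S. u v *\<^sub>R v)"
    using sum.reindex[OF True, of "\<lambda>v. u v *\<^sub>R v"] by simp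
  then show ?thesis using u by (intro exI[of _ "\<lambda>i. u (Y i)"]) auto
qed

lemma interp:
  fixes h x1 A B C R1 R2 R3 Q :: real
  assumes h: "h > 0"
    and e1: "A*x1^2/8 + B*x1/2 + C = R1"
    and e2: "A*(x1+h)^2/8 + B*(x1+h)/2 + C = R2"
    and e3: "A*(x1+2*h)^2/8 + B*(x1+2*h)/2 + C = R3"
    and q: "\<bar>R1\<bar> \<le> Q" "\<bar>R2\<bar> \<le> Q" "\<bar>R3\<bar> \<le> Q"
  defines "DA \<equiv> 16/h^2"
  defines "DB \<equiv> 2*(2 + DA*(2*\<bar>x1\<bar>*h+h^2)/8)/h"
  defines "DC \<equiv> 1 + DA*x1^2/8 + DB*\<bar>x1\<bar>/2"
  shows "\<bar>A\<bar> \<le> (DA+DB+DC) * Q \<and> \<bar>B\<bar> \<le> (DA+DB+DC) * Q \<and> \<bar>C\<bar> \<le> (DA+DB+DC) * Q"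
proof -
  have Q0: "0 \<le> Q" using q by linarith
  have DA0: "0 \<le> DA" by (simp add: DA_def)
  have DB0: "0 \<le> DB" using h DA0 by (simp add: DB_def)
  have DC0: "0 \<le> DC" using DA0 DB0 by (simp add: DC_def)
  have "R1 - 2*R2 + R3 = A*h^2/4"
    unfolding e1[symmetric] e2[symmetric] e3[symmetric] by (simp add: power2_eq_square field_simps)
  then have Aeq: "A = 4*(R1 - 2*R2 + R3)/h^2" using h by (simp add: field_simps)
  have "\<bar>R1 - 2*R2 + R3\<bar> \<le> 4*Q" using q by linarith
  then have bA: "\<bar>A\<bar> \<le> DA * Q" unfolding Aeq DA_def using h
    by (simp add: abs_mult abs_divide divide_le_eq field_simps)
  have "R2 - R1 = A*(2*x1*h + h^2)/8 + B*h/2"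
    unfolding e1[symmetric] e2[symmetric] by (simp add: power2_eq_square field_simps)
  then have Beq: "B = 2*((R2 - R1) - A*(2*x1*h + h^2)/8)/h" using h by (simp add: field_simps)
  have "\<bar>A*(2*x1*h + h^2)/8\<bar> \<le> DA*Q*(2*\<bar>x1\<bar>*h+h^2)/8"
  proof -
    have "\<bar>2*x1*h + h^2\<bar> \<le> 2*\<bar>x1\<bar>*h+h^2" using h by (simp add: abs_mult abs_triangle_ineq[THEN order_trans])
    then have "\<bar>A\<bar> * \<bar>2*x1*h + h^2\<bar> \<le> DA*Q*(2*\<bar>x1\<bar>*h+h^2)"
      using bA by (intro mult_mono) auto
    then show ?thesis by (simp add: abs_mult)
  qed
  then have "\<bar>(R2 - R1) - A*(2*x1*h + h^2)/8\<bar> \<le> 2*Q + DA*Q*(2*\<bar>x1\<bar>*h+h^2)/8"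
    using q by linarith
  then have "2*\<bar>(R2 - R1) - A*(2*x1*h + h^2)/8\<bar>/h \<le> 2*(2*Q + DA*Q*(2*\<bar>x1\<bar>*h+h^2)/8)/h"
    using h by (intro divide_right_mono) auto
  moreover have "\<bar>B\<bar> = 2*\<bar>(R2 - R1) - A*(2*x1*h + h^2)/8\<bar>/h" unfolding Beq using h by (simp only: abs_mult abs_divide)
  moreover have "2*(2*Q + DA*Q*(2*\<bar>x1\<bar>*h+h^2)/8)/h = DB * Q" unfolding DB_def by (simp add: field_simps)
  ultimately have bB: "\<bar>B\<bar> \<le> DB * Q" by simp
  have Ceq: "C = R1 - A*x1^2/8 - B*x1/2" using e1 by simp
  have "\<bar>A*x1^2/8\<bar> \<le> DA*Q*x1^2/8" using bA by (simp add: abs_mult mult_right_mono)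
  moreover have "\<bar>B*x1/2\<bar> \<le> DB*Q*\<bar>x1\<bar>/2" using bB by (simp add: abs_mult mult_right_mono)
  ultimately have bC: "\<bar>C\<bar> \<le> DC * Q" unfolding Ceq DC_def using q
    by (simp add: algebra_simps)
  show ?thesis using bA bB bC DA0 DB0 DC0 Q0
    by (smt (verit) mult_right_mono)
qed

lemma cont_bound:
  fixes f :: "real \<Rightarrow> complex"
  assumes "continuous_on {a..b} f"
  shows "\<exists>M\<ge>0. \<forall>t\<in>{a..b}. norm (f t) \<le> M"
proof -
  have "bounded (f ` {a..b})" by (rule compact_imp_bounded[OF compact_continuous_image[OF assms compact_Icc]])
  then obtain M where "\<forall>y\<in>f ` {a..b}. norm y \<le> M" by (auto simp: bounded_iff)
  then show ?thesis by (intro exI[of _ "max M 0"]) auto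
qed





definition cmpt :: "(real\<Rightarrow>real) \<times> (real\<Rightarrow>real) \<times> (real\<Rightarrow>real) \<times> (real\<Rightarrow>real) \<Rightarrow> nat \<Rightarrow> real \<Rightarrow> real" where
  "cmpt q j t = (case q of (ta,ch,sg,rh) \<Rightarrow> [ta t, deriv ta t, (deriv^^2) ta t, ch t, deriv ch t, sg t, rh t] ! j)"

definition cmpt' :: "(real\<Rightarrow>real) \<times> (real\<Rightarrow>real) \<times> (real\<Rightarrow>real) \<times> (real\<Rightarrow>real) \<Rightarrow> nat \<Rightarrow> real \<Rightarrow> real" where
  "cmpt' q j t = (case q of (ta,ch,sg,rh) \<Rightarrow> [deriv ta t, (deriv^^2) ta t, (deriv^^3) ta t, deriv ch t, deriv (deriv ch) t, deriv sg t, deriv rh t] ! j)"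

lemma cmpt'_simps: "cmpt' q 0 t = cmpt q 1 t" "cmpt' q 1 t = cmpt q 2 t" "cmpt' q 3 t = cmpt q 4 t"
  by (cases q; simp add: cmpt_def cmpt'_def)+

lemma smooth1_deriv:
  assumes "smooth1_on I f" "t \<in> I"
  shows "((deriv^^n) f has_real_derivative (deriv^^(Suc n)) f t) (at t)"
  using assms DERIV_deriv_iff_real_differentiable by (simp add: smooth1_on_def)

lemma seven_cases: "j < (7::nat) \<Longrightarrow> j = 0 \<or> j = 1 \<or> j = 2 \<or> j = 3 \<or> j = 4 \<or> j = 5 \<or> j = 6"
  by arith

lemma cmpt_deriv:
  assumes q: "q \<in> ess_alg I J V" and t: "t \<in> I" and j: "j < 7"
  shows "((\<lambda>s. cmpt q j s) has_real_derivative cmpt' q j t) (at t)"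
proof -
  obtain ta ch sg rh where qq: "q = (ta,ch,sg,rh)" by (cases q) auto
  from q have sm: "smooth1_on I ta" "smooth1_on I ch" "smooth1_on I sg" "smooth1_on I rh"
    by (auto simp: ess_alg_def qq)
  note d = smooth1_deriv[OF _ t]
  have a0: "(ta has_real_derivative deriv ta t) (at t)" using d[OF sm(1), of 0] by simp
  have a1: "(deriv ta has_real_derivative (deriv^^2) ta t) (at t)" using d[OF sm(1), of 1] by (simp add: numeral_2_eq_2)
  have a2: "((deriv^^2) ta has_real_derivative (deriv^^3) ta t) (at t)" using d[OF sm(1), of 2] by (simp add: numeral_3_eq_3)
  have b0: "(ch has_real_derivative deriv ch t) (at t)" using d[OF sm(2), of 0] by simp
  have b1: "(deriv ch has_real_derivative deriv (deriv ch) t) (at t)" using d[OF sm(2), of 1] by simp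
  have c0: "(sg has_real_derivative deriv sg t) (at t)" using d[OF sm(3), of 0] by simp
  have e0: "(rh has_real_derivative deriv rh t) (at t)" using d[OF sm(4), of 0] by simp
  from seven_cases[OF j] show ?thesis
    by (elim disjE) (simp_all add: cmpt_def cmpt'_def qq a0 a1 a2 b0 b1 c0 e0)
qed


lemma sum_cplx:
  fixes c P R :: "nat \<Rightarrow> real" and u :: complex
  shows "(\<Sum>i<k. c i *\<^sub>R ((\<i> * of_real (P i) + of_real (R i)) * u)) = (\<i> * of_real (\<Sum>i<k. c i * P i) + of_real (\<Sum>i<k. c i * R i)) * u"
    and "(\<Sum>i<k. c i *\<^sub>R (cnj (\<i> * of_real (P i) + of_real (R i)) * u)) = cnj (\<i> * of_real (\<Sum>i<k. c i * P i) + of_real (\<Sum>i<k. c i * R i)) * u"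
  by (induction k) (simp_all add: algebra_simps scaleR_conv_of_real)

lemma sum_lin2:
  fixes c a b :: "nat \<Rightarrow> real"
  shows "(\<Sum>i<k. c i * (a i * x/2 + b i)) = (\<Sum>i<k. c i * a i) * x/2 + (\<Sum>i<k. c i * b i)"
  by (induction k) (simp_all add: algebra_simps)

lemma sum_lin3:
  fixes c a b d :: "nat \<Rightarrow> real"
  shows "(\<Sum>i<k. c i * (a i * x^2/8 + b i * x/2 + d i)) = (\<Sum>i<k. c i * a i) * x^2/8 + (\<Sum>i<k. c i * b i) * x/2 + (\<Sum>i<k. c i * d i)"
  by (induction k) (simp_all add: field_simps)


lemma cmpt_eqs:
  assumes q: "q \<in> ess_alg I J V" and t: "t\<in>I" and x: "x\<in>J"
  shows "cmpt' q 2 t * x^2/8 + cmpt' q 4 t * x/2 + cmpt' q 5 t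
          = cmpt q 1 t * Re (V t x) + cmpt q 0 t * Re (pt V t x) + (cmpt q 1 t * x/2 + cmpt q 3 t) * Re (px V t x)"
    and "cmpt' q 6 t + cmpt q 2 t / 4 + cmpt q 1 t * Im (V t x) + cmpt q 0 t * Im (pt V t x)
          + (cmpt q 1 t * x/2 + cmpt q 3 t) * Im (px V t x) = 0"
proof -
  obtain ta ch sg rh where qq: "q = (ta,ch,sg,rh)" by (cases q) auto
  show "cmpt' q 2 t * x^2/8 + cmpt' q 4 t * x/2 + cmpt' q 5 t
          = cmpt q 1 t * Re (V t x) + cmpt q 0 t * Re (pt V t x) + (cmpt q 1 t * x/2 + cmpt q 3 t) * Re (px V t x)"
    using ess_eq(1)[of ta ch sg rh I J V t x] q t x by (simp add: qq cmpt_def cmpt'_def)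
  show "cmpt' q 6 t + cmpt q 2 t / 4 + cmpt q 1 t * Im (V t x) + cmpt q 0 t * Im (pt V t x)
          + (cmpt q 1 t * x/2 + cmpt q 3 t) * Im (px V t x) = 0"
    using ess_eq(2)[of ta ch sg rh I J V t x] q t x by (simp add: qq cmpt_def cmpt'_def)
qed

lemma vf_comp: "vf q t x u w = (cmpt q 0 t, cmpt q 1 t * x/2 + cmpt q 3 t,
   (\<i> * of_real (cmpt q 2 t * x^2/8 + cmpt q 4 t * x/2 + cmpt q 5 t) + of_real (cmpt q 6 t)) * u,
   cnj (\<i> * of_real (cmpt q 2 t * x^2/8 + cmpt q 4 t * x/2 + cmpt q 5 t) + of_real (cmpt q 6 t)) * w)"
  by (cases q) (simp add: vf_def cmpt_def coefT_def coefX_def coefPhi_def)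

lemma Rbound:
  fixes z0 z1 z3 a b d S M xx :: real
  assumes "\<bar>z0\<bar> \<le> S" "\<bar>z1\<bar> \<le> S" "\<bar>z3\<bar> \<le> S" "\<bar>a\<bar> \<le> M" "\<bar>b\<bar> \<le> M" "\<bar>d\<bar> \<le> M"
  shows "\<bar>z1*a + z0*b + (z1*xx/2 + z3)*d\<bar> \<le> M*(3+\<bar>xx\<bar>)*S"
proof -
  have S0: "0 \<le> S" using assms(1) by linarith
  have M0: "0 \<le> M" using assms(4) by linarith
  have 1: "\<bar>z1*a\<bar> \<le> S*M" unfolding abs_mult using assms by (intro mult_mono) auto
  have 2: "\<bar>z0*b\<bar> \<le> S*M" unfolding abs_mult using assms by (intro mult_mono) auto
  have "\<bar>z1*xx/2 + z3\<bar> \<le> S*\<bar>xx\<bar>/2 + S"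
  proof -
    have "\<bar>z1*xx/2\<bar> \<le> S*\<bar>xx\<bar>/2" unfolding abs_mult abs_divide using assms by (simp add: mult_right_mono)
    then show ?thesis using assms by linarith
  qed
  then have 3: "\<bar>(z1*xx/2 + z3)*d\<bar> \<le> (S*\<bar>xx\<bar>/2 + S)*M" unfolding abs_mult
    using assms S0 by (intro mult_mono) auto
  have "\<bar>z1*a + z0*b + (z1*xx/2 + z3)*d\<bar> \<le> S*M + S*M + (S*\<bar>xx\<bar>/2 + S)*M"
    using 1 2 3 by linarith
  also have "\<dots> \<le> M*(3+\<bar>xx\<bar>)*S" using S0 M0 by (simp add: algebra_simps mult_nonneg_nonneg)
  finally show ?thesis .
qed



theorem lemma1:
  fixes V :: "real \<Rightarrow> real \<Rightarrow> complex" and I J :: "real set"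
  assumes "open I" "is_interval I" "I \<noteq> {}"
      and "open J" "is_interval J" "J \<noteq> {}"
      and "smooth2_on (I \<times> J) V"
  shows "\<forall>k q. (\<forall>i<k. q i \<in> ess_alg I J V) \<and> vf_lin_indep I J k q \<longrightarrow> k \<le> 7"
proof (intro allI impI, elim conjE)
  fix k q assume qs: "\<forall>i<k. q i \<in> ess_alg I J V" and ind: "vf_lin_indep I J k q"
  show "k \<le> 7"
  proof (rule ccontr)
    assume "\<not> k \<le> 7"
    then have k7: "DIM(real\<times>real\<times>real\<times>real\<times>real\<times>real\<times>real) < k" by simp
    obtain t0 where t0: "t0 \<in> I" using assms(3) by blast
    define Y where "Y i = (cmpt (q i) 0 t0, cmpt (q i) 1 t0, cmpt (q i) 2 t0, cmpt (q i) 3 t0,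
        cmpt (q i) 4 t0, cmpt (q i) 5 t0, cmpt (q i) 6 t0)" for i
    obtain c where c: "\<exists>i<k. c i \<noteq> 0" "(\<Sum>i<k. c i *\<^sub>R Y i) = 0"
      using dep_family[OF k7, of Y] by blast
    define Z where "Z j t = (\<Sum>i<k. c i * cmpt (q i) j t)" for j t
    define Z' where "Z' j t = (\<Sum>i<k. c i * cmpt' (q i) j t)" for j t
    have Z0: "Z j t0 = 0" if "j<7" for j
    proof -
      from c(2) have "Z 0 t0 = 0 \<and> Z 1 t0 = 0 \<and> Z 2 t0 = 0 \<and> Z 3 t0 = 0 \<and> Z 4 t0 = 0 \<and> Z 5 t0 = 0 \<and> Z 6 t0 = 0"
        by (simp add: Y_def Z_def prod_eq_iff fst_sum snd_sum)
      with seven_cases[OF that] show ?thesis by auto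
    qed
    have Zd: "(Z j has_real_derivative Z' j t) (at t)" if "j<7" "t\<in>I" for j t
      unfolding Z_def[abs_def] Z'_def
      by (rule DERIV_sum) (use qs that in \<open>auto intro!: DERIV_cmult cmpt_deriv[where J=J and V=V]\<close>)
    have ZRe: "Z' 2 t * x^2/8 + Z' 4 t * x/2 + Z' 5 t
          = Z 1 t * Re (V t x) + Z 0 t * Re (pt V t x) + (Z 1 t * x/2 + Z 3 t) * Re (px V t x)"
      if "t\<in>I" "x\<in>J" for t x
    proof -
      have "(\<Sum>i<k. c i * ((cmpt' (q i) 2 t * x^2/8 + cmpt' (q i) 4 t * x/2 + cmpt' (q i) 5 t)
          - (cmpt (q i) 1 t * Re (V t x) + cmpt (q i) 0 t * Re (pt V t x) + (cmpt (q i) 1 t * x/2 + cmpt (q i) 3 t) * Re (px V t x)))) = 0"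
        using cmpt_eqs(1)[where V=V, OF _ that] qs by (auto intro!: sum.neutral)
      then show ?thesis unfolding Z_def Z'_def
        by (simp add: sum_distrib_left sum_distrib_right sum_subtractf sum.distrib algebra_simps sum_divide_distrib)
    qed
    have ZIm: "Z' 6 t + Z 2 t / 4 + Z 1 t * Im (V t x) + Z 0 t * Im (pt V t x)
          + (Z 1 t * x/2 + Z 3 t) * Im (px V t x) = 0"
      if "t\<in>I" "x\<in>J" for t x
    proof -
      have "(\<Sum>i<k. c i * (cmpt' (q i) 6 t + cmpt (q i) 2 t / 4 + cmpt (q i) 1 t * Im (V t x) + cmpt (q i) 0 t * Im (pt V t x)
          + (cmpt (q i) 1 t * x/2 + cmpt (q i) 3 t) * Im (px V t x))) = 0"
        using cmpt_eqs(2)[where V=V, OF _ that] qs by (auto intro!: sum.neutral)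
      then show ?thesis unfolding Z_def Z'_def
        by (simp add: sum_distrib_left sum_distrib_right sum.distrib algebra_simps sum_divide_distrib)
    qed
    have Zz: "\<forall>t\<in>I. \<forall>j<7. Z j t = 0"
    proof
      fix t1 assume t1: "t1 \<in> I"
      define a where "a = min t0 t1"
      define b where "b = max t0 t1"
      have abI: "{a..b} \<subseteq> I"
      proof
        fix s assume "s \<in> {a..b}"
        then have "min t0 t1 \<le> s" "s \<le> max t0 t1" by (auto simp: a_def b_def)
        moreover have iv: "\<And>u v y. u\<in>I \<Longrightarrow> v\<in>I \<Longrightarrow> u \<le> y \<Longrightarrow> y \<le> v \<Longrightarrow> y\<in>I"
          using assms(2) unfolding is_interval_1 by blast
        ultimately show "s \<in> I"
        proof (cases "t0 \<le> t1")
          case True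
          then show ?thesis using iv[OF t0 t1] \<open>min t0 t1 \<le> s\<close> \<open>s \<le> max t0 t1\<close> by (simp add: min_def max_def)
        next
          case False
          then show ?thesis using iv[OF t1 t0] \<open>min t0 t1 \<le> s\<close> \<open>s \<le> max t0 t1\<close> by (simp add: min_def max_def)
        qed
      qed
      have ab: "a \<le> t0" "t0 \<le> b" "a \<le> t1" "t1 \<le> b" by (auto simp: a_def b_def)
      obtain x1 where x1: "x1 \<in> J" using assms(6) by blast
      obtain e where e: "e>0" "ball x1 e \<subseteq> J" using assms(4) x1 open_contains_ball by blast
      define h where "h = e/3"
      have h0: "h > 0" using e by (simp add: h_def)
      have x23: "x1+h \<in> J" "x1+2*h \<in> J" using e h0 by (auto simp: h_def dist_real_def subset_iff)
      have cont: "continuous_on {a..b} (\<lambda>t. iter_partial ds V t xx)" if "xx\<in>J" for ds xx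
      proof -
        have c: "continuous_on (I\<times>J) (\<lambda>(t,x). iter_partial ds V t x)" using assms(7) unfolding smooth2_on_def by blast
        have "continuous_on {a..b} ((\<lambda>(t,x). iter_partial ds V t x) \<circ> (\<lambda>t. (t,xx)))"
          by (rule continuous_on_compose[OF continuous_on_Pair[OF continuous_on_id continuous_on_const] continuous_on_subset[OF c]]) (use abI that in auto)
        then show ?thesis by (simp add: o_def)
      qed
      have bnd3: "\<exists>M\<ge>0. \<forall>t\<in>{a..b}. norm (V t xx) \<le> M \<and> norm (pt V t xx) \<le> M \<and> norm (px V t xx) \<le> M" if xx: "xx\<in>J" for xx
      proof -
        obtain M1 where M1: "M1\<ge>0" "\<forall>t\<in>{a..b}. norm (V t xx) \<le> M1" using cont_bound[OF cont[OF xx, of "[]"]] by auto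
        obtain M2 where M2: "M2\<ge>0" "\<forall>t\<in>{a..b}. norm (pt V t xx) \<le> M2" using cont_bound[OF cont[OF xx, of "[Dt]"]] by auto
        obtain M3 where M3: "M3\<ge>0" "\<forall>t\<in>{a..b}. norm (px V t xx) \<le> M3" using cont_bound[OF cont[OF xx, of "[Dx]"]] by auto
        show ?thesis using M1 M2 M3 by (intro exI[of _ "M1+M2+M3"]) force
      qed
      obtain M1 where M1: "M1\<ge>0" "\<forall>t\<in>{a..b}. norm (V t x1) \<le> M1 \<and> norm (pt V t x1) \<le> M1 \<and> norm (px V t x1) \<le> M1"
        using bnd3[OF x1] by blast
      obtain M2 where M2: "M2\<ge>0" "\<forall>t\<in>{a..b}. norm (V t (x1+h)) \<le> M2 \<and> norm (pt V t (x1+h)) \<le> M2 \<and> norm (px V t (x1+h)) \<le> M2"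
        using bnd3[OF x23(1)] by blast
      obtain M3 where M3: "M3\<ge>0" "\<forall>t\<in>{a..b}. norm (V t (x1+2*h)) \<le> M3 \<and> norm (pt V t (x1+2*h)) \<le> M3 \<and> norm (px V t (x1+2*h)) \<le> M3"
        using bnd3[OF x23(2)] by blast
      define M where "M = M1+M2+M3"
      have M0: "0 \<le> M" using M1 M2 M3 by (simp add: M_def)
      have Mb: "norm (V s xx) \<le> M \<and> norm (pt V s xx) \<le> M \<and> norm (px V s xx) \<le> M"
        if "s \<in> {a..b}" "xx \<in> {x1, x1+h, x1+2*h}" for s xx
      proof -
        have a1: "norm (V s x1) \<le> M1 \<and> norm (pt V s x1) \<le> M1 \<and> norm (px V s x1) \<le> M1" using M1(2) that(1) by blast
        have a2: "norm (V s (x1+h)) \<le> M2 \<and> norm (pt V s (x1+h)) \<le> M2 \<and> norm (px V s (x1+h)) \<le> M2" using M2(2) that(1) by blast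
        have a3: "norm (V s (x1+2*h)) \<le> M3 \<and> norm (pt V s (x1+2*h)) \<le> M3 \<and> norm (px V s (x1+2*h)) \<le> M3" using M3(2) that(1) by blast
        from that(2) consider "xx = x1" | "xx = x1+h" | "xx = x1+2*h" by blast
        then show ?thesis
        proof cases
          case 1 then show ?thesis using a1 M2(1) M3(1) unfolding M_def by auto
        next
          case 2 then show ?thesis using a2 M1(1) M3(1) unfolding M_def by auto
        next
          case 3 then show ?thesis using a3 M1(1) M2(1) unfolding M_def by auto
        qed
      qed
      define S where "S s = (\<Sum>j<7. \<bar>Z j s\<bar>)" for s
      have ZS: "\<bar>Z j s\<bar> \<le> S s" if "j<7" for j s
        unfolding S_def using that by (intro member_le_sum) auto
      have S0: "0 \<le> S s" for s unfolding S_def by (simp add: sum_nonneg)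
      define Bq where "Bq = M*(3+\<bar>x1\<bar>+2*h)"
      have Bq0: "0 \<le> Bq" using M0 h0 by (simp add: Bq_def)
      have xxb: "\<bar>xx\<bar> \<le> \<bar>x1\<bar>+2*h" if "xx \<in> {x1, x1+h, x1+2*h}" for xx using that h0 by auto
      have Rb: "\<bar>Z 1 s * Re (V s xx) + Z 0 s * Re (pt V s xx) + (Z 1 s * xx/2 + Z 3 s) * Re (px V s xx)\<bar> \<le> Bq * S s"
        if "s \<in> {a..b}" "xx \<in> {x1, x1+h, x1+2*h}" for s xx
      proof -
        have "\<bar>Z 1 s * Re (V s xx) + Z 0 s * Re (pt V s xx) + (Z 1 s * xx/2 + Z 3 s) * Re (px V s xx)\<bar> \<le> M*(3+\<bar>xx\<bar>)*S s"
          using Mb[OF that] ZS[of 0 s] ZS[of 1 s] ZS[of 3 s] abs_Re_le_cmod[of "V s xx"] abs_Re_le_cmod[of "pt V s xx"] abs_Re_le_cmod[of "px V s xx"]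
          by (intro Rbound) auto
        also have "\<dots> \<le> Bq * S s" unfolding Bq_def using xxb[OF that(2)] M0 S0[of s]
          by (intro mult_right_mono mult_left_mono) auto
        finally show ?thesis .
      qed
      have Ib: "\<bar>Z 1 s * Im (V s x1) + Z 0 s * Im (pt V s x1) + (Z 1 s * x1/2 + Z 3 s) * Im (px V s x1)\<bar> \<le> Bq * S s"
        if "s \<in> {a..b}" for s
      proof -
        have "\<bar>Z 1 s * Im (V s x1) + Z 0 s * Im (pt V s x1) + (Z 1 s * x1/2 + Z 3 s) * Im (px V s x1)\<bar> \<le> M*(3+\<bar>x1\<bar>)*S s"
          using Mb[OF that, of x1] ZS[of 0 s] ZS[of 1 s] ZS[of 3 s] abs_Im_le_cmod[of "V s x1"] abs_Im_le_cmod[of "pt V s x1"] abs_Im_le_cmod[of "px V s x1"]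
          by (intro Rbound) auto
        also have "\<dots> \<le> Bq * S s" unfolding Bq_def using h0 M0 S0[of s]
          by (intro mult_right_mono mult_left_mono) auto
        finally show ?thesis .
      qed
      define D where "D = 16/h^2 + 2*(2 + 16/h^2*(2*\<bar>x1\<bar>*h+h^2)/8)/h + (1 + 16/h^2*x1^2/8 + 2*(2 + 16/h^2*(2*\<bar>x1\<bar>*h+h^2)/8)/h*\<bar>x1\<bar>/2)"
      have D0: "0 \<le> D" using h0 by (simp add: D_def)
      define K where "K = 1 + D*Bq + Bq"
      have K1: "1 \<le> K" using D0 Bq0 by (simp add: K_def)
      have bnd: "\<bar>Z' j s\<bar> \<le> K * S s" if j: "j<7" and s: "a \<le> s" "s \<le> b" for j s
      proof -
        have sI: "s \<in> I" using abI s by auto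
        have sab: "s \<in> {a..b}" using s by auto
        have KS: "S s \<le> K * S s" using K1 S0[of s] by (simp add: mult_right_mono[of 1 K, simplified])
        have Z'0: "Z' 0 s = Z 1 s" "Z' 1 s = Z 2 s" "Z' 3 s = Z 4 s"
          unfolding Z_def Z'_def cmpt'_simps by simp_all
        have ip: "\<bar>Z' 2 s\<bar> \<le> D * (Bq * S s) \<and> \<bar>Z' 4 s\<bar> \<le> D * (Bq * S s) \<and> \<bar>Z' 5 s\<bar> \<le> D * (Bq * S s)"
          unfolding D_def
          by (rule interp[OF h0 ZRe[OF sI x1] ZRe[OF sI x23(1)] ZRe[OF sI x23(2)] Rb[OF sab] Rb[OF sab] Rb[OF sab]]) auto
        have DBS: "D * (Bq * S s) \<le> K * S s"
          using D0 Bq0 S0[of s] unfolding K_def by (simp add: algebra_simps mult_nonneg_nonneg)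
        have "Z' 6 s = - (Z 2 s / 4 + (Z 1 s * Im (V s x1) + Z 0 s * Im (pt V s x1) + (Z 1 s * x1/2 + Z 3 s) * Im (px V s x1)))"
          using ZIm[OF sI x1] by linarith
        then have "\<bar>Z' 6 s\<bar> \<le> S s / 4 + Bq * S s" using Ib[OF sab] ZS[of 2 s] by linarith
        also have "\<dots> \<le> K * S s" using D0 Bq0 S0[of s] unfolding K_def by (simp add: algebra_simps mult_nonneg_nonneg)
        finally have Z6: "\<bar>Z' 6 s\<bar> \<le> K * S s" .
        have z1: "\<bar>Z 1 s\<bar> \<le> K * S s" "\<bar>Z 2 s\<bar> \<le> K * S s" "\<bar>Z 4 s\<bar> \<le> K * S s"
          using ZS[of 1 s] ZS[of 2 s] ZS[of 4 s] KS by linarith+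
        have z2: "\<bar>Z' 2 s\<bar> \<le> K * S s" "\<bar>Z' 4 s\<bar> \<le> K * S s" "\<bar>Z' 5 s\<bar> \<le> K * S s"
          using ip DBS by linarith+
        from seven_cases[OF j] show ?thesis
        proof (elim disjE)
        qed (simp_all only: Z'0 z1 z2 Z6)
      qed
      show "\<forall>j<7. Z j t1 = 0"
      proof (rule ode_zero[of 7 a b Z Z' K t0 t1])
        show "(Z j has_real_derivative Z' j s) (at s)" if "j<7" "a \<le> s" "s \<le> b" for j s
          using that abI by (intro Zd) auto
        show "\<bar>Z' j s\<bar> \<le> K * (\<Sum>k<7. \<bar>Z k s\<bar>)" if "j<7" "a \<le> s" "s \<le> b" for j s
          using bnd[OF that] unfolding S_def .
        show "Z j t0 = 0" if "j<7" for j using Z0[OF that] .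
      qed (use ab in auto)
    qed
    have "\<forall>t\<in>I. \<forall>x\<in>J. \<forall>u w. (\<Sum>i<k. c i *\<^sub>R vf (q i) t x u w) = 0"
    proof (intro ballI allI)
      fix t x u w assume t: "t\<in>I" and x: "x\<in>J"
      have z: "(\<Sum>i<k. c i * cmpt (q i) j t) = 0" if "j<7" for j using Zz t that unfolding Z_def by blast
      show "(\<Sum>i<k. c i *\<^sub>R vf (q i) t x u w) = 0"
        unfolding vf_comp
        apply (simp only: prod_eq_iff fst_sum snd_sum fst_conv snd_conv scaleR_Pair sum_cplx)
        apply (simp add: sum_lin2 sum_lin3 z)
        done
    qed
    with ind have "\<forall>i<k. c i = 0" unfolding vf_lin_indep_def by blast
    with c(1) show False by blast
  qed
qed

end
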